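(* There is an absolute constant $C$ such that the following holds. If $G=(U,V,E)$ is a path-restricted ordered bipartite graph in which every forward path has length (number of edges) at most $k$, then $|E|\le C\,k\,(|U|+|V|)$, i.e. $G$ has $O(k(|U|+|V|))$ edges.
   Context: An ordered bipartite graph is $G=(U,V,E)$ where $U,V$ are disjoint finite sets, each carrying a strict total order (both written $<$), and $E\subseteq U\times V$. A path is a sequence of edges in which consecutive edges share a vertex. A path visiting the vertices of $U$ in the order $u_1,\dots,u_k$ and those of $V$ in the order $v_1,\dots,v_l$ is a forward path if either $u_1<\dots<u_k$ and $v_1<\dots<v_l$, or $u_1>\dots>u_k$ and $v_1>\dots>v_l$. For $x\le y$ in $U$ write $\langle x,y\rangle=\{u\in U: x\le u\le y\}$, and similarly in $V$. If $u_a<u_b$ are the smallest and largest $U$-vertices and $v_c<v_d$ the smallest and largest $V$-vertices of a forward path $P$, the range of $P$ is $\{\langle u_a,u_b\rangle,\langle v_c,v_d\rangle\}$. A vertex of $P$ is non-terminal if it is adjacent along $P$ to two vertices of $P$. An edge is a back edge to $P$ if either it is $(u_a,v_j)$ with $v_j\in\langle v_c,v_d\rangle$ and $v_j>v'$ for some non-terminal vertex $v'\in V$ of $P$, or it is $(u_i,v_c)$ with $u_i\in\langle u_a,u_b\rangle$ and $u_i>u'$ for some non-terminal vertex $u'\in U$ of $P$. $G$ is a path-restricted ordered bipartite graph (PRBG) if no forward path in $G$ has a back edge in $E$. *)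

theory Defs
  imports Complex_Main
begin

text \<open>Ordered bipartite graph: the two sides U and V are finite sets of naturals
(every finite strict total order is order-isomorphic to an initial segment of nat),
ordered by the order of nat. Vertices are tagged by side: Inl u for u in U, Inr v for v in V,
so the sides are disjoint as vertex sets.\<close>

fun adj :: "(nat \<times> nat) set \<Rightarrow> nat + nat \<Rightarrow> nat + nat \<Rightarrow> bool" where
  "adj E (Inl u) (Inr v) = ((u, v) \<in> E)"
| "adj E (Inr v) (Inl u) = ((u, v) \<in> E)"
| "adj E _ _ = False"

definition is_path :: "(nat \<times> nat) set \<Rightarrow> (nat + nat) list \<Rightarrow> bool" where
  "is_path E P \<longleftrightarrow> 2 \<le> length P \<and> distinct P \<and>
     (\<forall>i. i + 1 < length P \<longrightarrow> adj E (P ! i) (P ! (i + 1)))"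

definition path_len :: "(nat + nat) list \<Rightarrow> nat" where
  "path_len P = length P - 1"

definition uverts :: "(nat + nat) list \<Rightarrow> nat list" where
  "uverts P = concat (map (case_sum (\<lambda>u. [u]) (\<lambda>_. [])) P)"

definition vverts :: "(nat + nat) list \<Rightarrow> nat list" where
  "vverts P = concat (map (case_sum (\<lambda>_. []) (\<lambda>v. [v])) P)"

definition forward_path :: "(nat \<times> nat) set \<Rightarrow> (nat + nat) list \<Rightarrow> bool" where
  "forward_path E P \<longleftrightarrow> is_path E P \<and>
     ((sorted_wrt (<) (uverts P) \<and> sorted_wrt (<) (vverts P)) \<or>
      (sorted_wrt (>) (uverts P) \<and> sorted_wrt (>) (vverts P)))"

definition nonterm_U :: "(nat + nat) list \<Rightarrow> nat set" where
  "nonterm_U P = {u. \<exists>i. 0 < i \<and> i + 1 < length P \<and> P ! i = Inl u}"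

definition nonterm_V :: "(nat + nat) list \<Rightarrow> nat set" where
  "nonterm_V P = {v. \<exists>i. 0 < i \<and> i + 1 < length P \<and> P ! i = Inr v}"

definition back_edge :: "(nat + nat) list \<Rightarrow> nat \<times> nat \<Rightarrow> bool" where
  "back_edge P e \<longleftrightarrow>
     (let ua = Min (set (uverts P)); ub = Max (set (uverts P));
          vc = Min (set (vverts P)); vd = Max (set (vverts P)) in
      (fst e = ua \<and> vc \<le> snd e \<and> snd e \<le> vd \<and> (\<exists>v'\<in>nonterm_V P. v' < snd e)) \<or>
      (snd e = vc \<and> ua \<le> fst e \<and> fst e \<le> ub \<and> (\<exists>u'\<in>nonterm_U P. u' < fst e)))"

definition PRBG :: "nat set \<Rightarrow> nat set \<Rightarrow> (nat \<times> nat) set \<Rightarrow> bool" where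
  "PRBG U V E \<longleftrightarrow> finite U \<and> finite V \<and> E \<subseteq> U \<times> V \<and>
     \<not> (\<exists>P e. forward_path E P \<and> e \<in> E \<and> back_edge P e)"

end

theory Submission
  imports Defs
begin

lemma adj_mono: "E \<subseteq> F \<Longrightarrow> adj E x y \<Longrightarrow> adj F x y"
  by (cases "(E,x,y)" rule: adj.cases) auto

lemma adj_cases: "adj E x y \<Longrightarrow> (\<exists>u v. x = Inl u \<and> y = Inr v \<and> (u,v) \<in> E) \<or> (\<exists>u v. x = Inr v \<and> y = Inl u \<and> (u,v) \<in> E)"
  by (cases "(E,x,y)" rule: adj.cases) auto

lemma uverts_append[simp]: "uverts (xs @ ys) = uverts xs @ uverts ys"
  by (simp add: uverts_def)
lemma vverts_append[simp]: "vverts (xs @ ys) = vverts xs @ vverts ys"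
  by (simp add: vverts_def)
lemma uverts_simps[simp]: "uverts [Inl u] = [u]" "uverts [Inr v] = []" "uverts [] = []"
  "uverts (Inl u # xs) = u # uverts xs" "uverts (Inr v # xs) = uverts xs"
  by (simp_all add: uverts_def)
lemma vverts_simps[simp]: "vverts [Inl u] = []" "vverts [Inr v] = [v]" "vverts [] = []"
  "vverts (Inl u # xs) = vverts xs" "vverts (Inr v # xs) = v # vverts xs"
  by (simp_all add: vverts_def)

lemma set_uverts: "Inl u \<in> set P \<Longrightarrow> u \<in> set (uverts P)"
  by (induction P) (auto simp: uverts_def split: sum.splits)
lemma set_vverts: "Inr v \<in> set P \<Longrightarrow> v \<in> set (vverts P)"
  by (induction P) (auto simp: vverts_def split: sum.splits)

lemma split_last2: "2 \<le> length P \<Longrightarrow> \<exists>Q x y. P = Q @ [x, y]"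
proof -
  assume "2 \<le> length P"
  then obtain y R where "rev P = y # R" by (cases "rev P") auto
  moreover with \<open>2 \<le> length P\<close> obtain x S where "R = x # S"
    by (cases R) (auto dest: arg_cong[where f=length])
  ultimately have "P = rev S @ [x, y]" by (metis append.assoc append_Cons append_Nil rev.simps(2) rev_rev_ident)
  then show ?thesis by blast
qed

lemma path_snoc:
  assumes "is_path E' P" "E' \<subseteq> E" "adj E (last P) w" "w \<notin> set P"
  shows "is_path E (P @ [w])"
  unfolding is_path_def
proof (intro conjI allI impI)
  show "2 \<le> length (P @ [w])" using assms(1) by (simp add: is_path_def)
  show "distinct (P @ [w])" using assms(1,4) by (simp add: is_path_def)
  fix i assume i: "i + 1 < length (P @ [w])"
  show "adj E ((P @ [w]) ! i) ((P @ [w]) ! (i + 1))"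
  proof (cases "i + 1 < length P")
    case True
    then have "adj E' (P ! i) (P ! (i+1))" using assms(1) by (simp add: is_path_def)
    then show ?thesis using True assms(2) by (simp add: nth_append adj_mono)
  next
    case False
    then have "i + 1 = length P" using i by simp
    moreover have "P \<noteq> []" using assms(1) by (auto simp: is_path_def)
    ultimately have "i = length P - 1" by simp
    then show ?thesis using assms(3) \<open>P \<noteq> []\<close> by (simp add: nth_append last_conv_nth)
  qed
qed

definition incpath :: "(nat \<times> nat) set \<Rightarrow> (nat + nat) list \<Rightarrow> bool" where
  "incpath E P \<longleftrightarrow> is_path E P \<and> sorted_wrt (<) (uverts P) \<and> sorted_wrt (<) (vverts P)"

lemma extend:
  assumes P: "incpath E' P" and sub: "E' \<subseteq> E"
    and hE': "\<And>u v. (u,v) \<in> E' \<Longrightarrow> (\<exists>u'>u. (u',v)\<in>E) \<and> (\<exists>v'>v. (u,v')\<in>E)"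
  shows "\<exists>w. incpath E (P @ [w])"
proof -
  have ip: "is_path E' P" and su: "sorted_wrt (<) (uverts P)" and sv: "sorted_wrt (<) (vverts P)"
    using P by (auto simp: incpath_def)
  have "2 \<le> length P" using ip by (simp add: is_path_def)
  then obtain Q x y where Pe: "P = Q @ [x, y]" using split_last2 by blast
  have "length Q + 1 < length P" using Pe by simp
  then have "adj E' (P ! length Q) (P ! (length Q + 1))" using ip unfolding is_path_def by blast
  moreover have "P ! length Q = x" using Pe by simp
  moreover have "P ! (length Q + 1) = y" using Pe nth_append_length_plus[of Q "[x,y]" 1] by simp
  ultimately have "adj E' x y" by simp
  from adj_cases[OF this] show ?thesis
  proof
    assume "\<exists>u v. x = Inl u \<and> y = Inr v \<and> (u,v) \<in> E'"
    then obtain u v where xy: "x = Inl u" "y = Inr v" "(u,v) \<in> E'" by blast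
    then obtain u' where u': "u' > u" "(u',v) \<in> E" using hE' by blast
    have uvP: "uverts P = uverts Q @ [u]" using Pe xy by simp
    have allu: "\<forall>z\<in>set (uverts P). z < u'"
      using su u'(1) unfolding uvP by (auto simp: sorted_wrt_append)
    have "Inl u' \<notin> set P" using allu set_uverts by blast
    moreover have "adj E (last P) (Inl u')" using Pe xy u' by simp
    ultimately have "is_path E (P @ [Inl u'])" using path_snoc ip sub by blast
    moreover have "sorted_wrt (<) (uverts (P @ [Inl u']))"
      using su allu by (simp add: sorted_wrt_append)
    moreover have "sorted_wrt (<) (vverts (P @ [Inl u']))" using sv by simp
    ultimately show ?thesis unfolding incpath_def by blast
  next
    assume "\<exists>u v. x = Inr v \<and> y = Inl u \<and> (u,v) \<in> E'"
    then obtain u v where xy: "x = Inr v" "y = Inl u" "(u,v) \<in> E'" by blast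
    then obtain v' where v': "v' > v" "(u,v') \<in> E" using hE' by blast
    have vvP: "vverts P = vverts Q @ [v]" using Pe xy by simp
    have allv: "\<forall>z\<in>set (vverts P). z < v'"
      using sv v'(1) unfolding vvP by (auto simp: sorted_wrt_append)
    have "Inr v' \<notin> set P" using allv set_vverts by blast
    moreover have "adj E (last P) (Inr v')" using Pe xy v' by simp
    ultimately have "is_path E (P @ [Inr v'])" using path_snoc ip sub by blast
    moreover have "sorted_wrt (<) (vverts (P @ [Inr v']))"
      using sv allv by (simp add: sorted_wrt_append)
    moreover have "sorted_wrt (<) (uverts (P @ [Inr v']))" using su by simp
    ultimately show ?thesis unfolding incpath_def by blast
  qed
qed

lemma card_last_row:
  fixes E :: "(nat \<times> nat) set"
  assumes "finite U" "E \<subseteq> U \<times> V"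
  shows "card {(u,v)\<in>E. \<not>(\<exists>v'>v. (u,v')\<in>E)} \<le> card U"
proof -
  let ?A = "{(u,v)\<in>E. \<not>(\<exists>v'>v. (u,v')\<in>E)}"
  have inj: "inj_on fst ?A"
  proof (rule inj_onI)
    fix a b assume h: "a \<in> ?A" "b \<in> ?A" "fst a = fst b"
    obtain a1 a2 where a: "a = (a1,a2)" by (cases a)
    obtain b1 b2 where b: "b = (b1,b2)" by (cases b)
    have e: "(a1,a2)\<in>E" "(a1,b2)\<in>E" "\<not>(\<exists>v'>a2. (a1,v')\<in>E)" "\<not>(\<exists>v'>b2. (a1,v')\<in>E)"
      using h a b by auto
    then have "a2 = b2" by (meson linorder_neqE_nat)
    then show "a = b" using h a b by simp
  qed
  have "card ?A = card (fst ` ?A)" using inj by (rule card_image[symmetric])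
  also have "\<dots> \<le> card U" by (rule card_mono[OF assms(1)]) (use assms(2) in auto)
  finally show ?thesis .
qed

lemma card_last_col:
  fixes E :: "(nat \<times> nat) set"
  assumes "finite V" "E \<subseteq> U \<times> V"
  shows "card {(u,v)\<in>E. \<not>(\<exists>u'>u. (u',v)\<in>E)} \<le> card V"
proof -
  let ?A = "{(u,v)\<in>E. \<not>(\<exists>u'>u. (u',v)\<in>E)}"
  have inj: "inj_on snd ?A"
  proof (rule inj_onI)
    fix a b assume h: "a \<in> ?A" "b \<in> ?A" "snd a = snd b"
    obtain a1 a2 where a: "a = (a1,a2)" by (cases a)
    obtain b1 b2 where b: "b = (b1,b2)" by (cases b)
    have e: "(a1,a2)\<in>E" "(b1,a2)\<in>E" "\<not>(\<exists>u'>a1. (u',a2)\<in>E)" "\<not>(\<exists>u'>b1. (u',a2)\<in>E)"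
      using h a b by auto
    then have "a1 = b1" by (meson linorder_neqE_nat)
    then show "a = b" using h a b by simp
  qed
  have "card ?A = card (snd ` ?A)" using inj by (rule card_image[symmetric])
  also have "\<dots> \<le> card V" by (rule card_mono[OF assms(1)]) (use assms(2) in auto)
  finally show ?thesis .
qed

lemma main:
  assumes "finite U" "finite V"
  shows "E \<subseteq> U \<times> V \<Longrightarrow> (\<forall>P. incpath E P \<longrightarrow> path_len P \<le> k) \<Longrightarrow> card E \<le> k * (card U + card V)"
proof (induction k arbitrary: E)
  case 0
  have "E = {}"
  proof (rule ccontr)
    assume "E \<noteq> {}"
    then obtain u v where uv: "(u,v) \<in> E" by auto
    have "incpath E [Inl u, Inr v]"
      unfolding incpath_def is_path_def using uv by (auto simp: less_Suc_eq)
    then show False using 0(2) by (auto simp: path_len_def)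
  qed
  then show ?case by simp
next
  case (Suc k)
  define E' where "E' = {(u,v)\<in>E. (\<exists>u'>u. (u',v)\<in>E) \<and> (\<exists>v'>v. (u,v')\<in>E)}"
  have sub: "E' \<subseteq> E" by (auto simp: E'_def)
  have fE: "finite E" using Suc.prems(1) assms finite_subset by blast
  have "\<forall>P. incpath E' P \<longrightarrow> path_len P \<le> k"
  proof (intro allI impI)
    fix P assume "incpath E' P"
    then obtain w where "incpath E (P @ [w])" using extend[OF _ sub] by (fastforce simp: E'_def)
    then have "path_len (P @ [w]) \<le> Suc k" using Suc.prems(2) by blast
    moreover have "P \<noteq> []" using \<open>incpath E' P\<close> by (auto simp: incpath_def is_path_def)
    ultimately show "path_len P \<le> k" by (simp add: path_len_def)
  qed
  then have c1: "card E' \<le> k * (card U + card V)" using Suc.IH Suc.prems(1) sub by blast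
  have "E - E' \<subseteq> {(u,v)\<in>E. \<not>(\<exists>v'>v. (u,v')\<in>E)} \<union> {(u,v)\<in>E. \<not>(\<exists>u'>u. (u',v)\<in>E)}"
    by (auto simp: E'_def)
  then have "card (E - E') \<le> card {(u,v)\<in>E. \<not>(\<exists>v'>v. (u,v')\<in>E)} + card {(u,v)\<in>E. \<not>(\<exists>u'>u. (u',v)\<in>E)}"
  proof -
    let ?A = "{(u,v)\<in>E. \<not>(\<exists>v'>v. (u,v')\<in>E)}" and ?B = "{(u,v)\<in>E. \<not>(\<exists>u'>u. (u',v)\<in>E)}"
    assume h: "E - E' \<subseteq> ?A \<union> ?B"
    have fAB: "finite (?A \<union> ?B)" by (rule finite_subset[OF _ fE]) auto
    have "card (E - E') \<le> card (?A \<union> ?B)" by (rule card_mono[OF fAB h])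
    also have "\<dots> \<le> card ?A + card ?B" by (rule card_Un_le)
    finally show ?thesis .
  qed
  also have "\<dots> \<le> card U + card V"
    using card_last_row[OF assms(1) Suc.prems(1)] card_last_col[OF assms(2) Suc.prems(1)] by simp
  finally have c2: "card (E - E') \<le> card U + card V" .
  have "card E = card E' + card (E - E')"
    using fE sub by (metis card_Diff_subset card_mono add_diff_inverse_nat finite_subset not_le)
  then show ?case using c1 c2 by simp
qed

theorem lemma8:
  shows "\<exists>C::real. \<forall>(U::nat set) (V::nat set) (E::(nat \<times> nat) set) (k::nat).
           PRBG U V E \<and> (\<forall>P. forward_path E P \<longrightarrow> path_len P \<le> k) \<longrightarrow>
           real (card E) \<le> C * real k * (real (card U) + real (card V))"
proof (intro exI[of _ 1] allI impI)
  fix U V :: "nat set" and E :: "(nat \<times> nat) set" and k :: nat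
  assume a: "PRBG U V E \<and> (\<forall>P. forward_path E P \<longrightarrow> path_len P \<le> k)"
  have "\<forall>P. incpath E P \<longrightarrow> path_len P \<le> k"
    using a by (auto simp: incpath_def forward_path_def)
  then have "card E \<le> k * (card U + card V)"
    using main a by (auto simp: PRBG_def)
  then have "real (card E) \<le> real (k * (card U + card V))" by linarith
  then show "real (card E) \<le> 1 * real k * (real (card U) + real (card V))" by simp
qed

end
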